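(* Let $q$ be a power of the prime $p$ and let $\mathcal{G}$ be a subgroup of $(\mathbb{F}_q,+)$ of order $p$. If there exists a $\mathcal{G}$-fixed c-Wieferich prime in $\mathbb{F}_q[T]$ of degree $p$, then every $\mathcal{G}$-fixed monic irreducible polynomial in $\mathbb{F}_q[T]$ of degree $p$ is a c-Wieferich prime in $\mathbb{F}_{q^r}[T]$ for at least one $r\in\{1,\ldots,p-1\}$.
   Context: For a prime power $Q$, the Carlitz module over $\mathbb{F}_Q[T]$: $\rho_N(X)$ for $N\in\mathbb{F}_Q[T]$ is the additive polynomial determined by requiring $N\mapsto\rho_N$ to be an $\mathbb{F}_Q$-algebra homomorphism into additive polynomials (multiplication = composition) with $\rho_T(X)=X^Q+TX$. A monic irreducible $\mathcal{P}\in\mathbb{F}_Q[T]$ is a c-Wieferich prime in $\mathbb{F}_Q[T]$ if $\rho_{\mathcal{P}-1}(1)\equiv0\pmod{\mathcal{P}^2}$. A polynomial $f$ is $\mathcal{G}$-fixed if $f(T+a)=f(T)$ for all $a\in\mathcal{G}$. *)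

theory Defs
  imports "HOL-Computational_Algebra.Computational_Algebra" "HOL-Library.Cardinality"
begin

text \<open>Carlitz module with parameter Q (the size of the constant field F_Q).
  rho_T(X) = X^Q + T X, and rho_N = sum_i c_i rho_T^i for N = sum_i c_i T^i
  (this is the unique F_Q-algebra homomorphism into additive polynomials,
  composition as multiplication).\<close>

definition carlitz_T :: "nat \<Rightarrow> 'a::comm_ring_1 poly \<Rightarrow> 'a poly" where
  "carlitz_T Q x = x ^ Q + [:0, 1:] * x"

definition carlitz :: "nat \<Rightarrow> 'a::comm_ring_1 poly \<Rightarrow> 'a poly \<Rightarrow> 'a poly" where
  "carlitz Q N x = (\<Sum>i\<le>degree N. smult (coeff N i) ((carlitz_T Q ^^ i) x))"

definition carlitz_wieferich_cong :: "nat \<Rightarrow> 'a::comm_ring_1 poly \<Rightarrow> bool" where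
  "carlitz_wieferich_cong Q P \<longleftrightarrow> P ^ 2 dvd carlitz Q (P - 1) 1"

definition c_wieferich :: "'a::{finite,field} poly \<Rightarrow> bool" where
  "c_wieferich P \<longleftrightarrow> lead_coeff P = 1 \<and> irreducible P \<and>
      carlitz_wieferich_cong CARD('a) P"

definition G_fixed :: "'a::comm_ring_1 set \<Rightarrow> 'a poly \<Rightarrow> bool" where
  "G_fixed G f \<longleftrightarrow> (\<forall>a\<in>G. pcompose f [:a, 1:] = f)"

end

theory Submission
  imports Defs "HOL-Number_Theory.Cong"
begin


fun bseq :: "'b::comm_ring_1 \<Rightarrow> nat \<Rightarrow> 'b" where
  "bseq s 0 = 1"
| "bseq s (Suc n) = (\<Sum>k\<le>n. of_nat (n choose k) * s ^ (n - k) * bseq s k)"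

definition useq :: "'b::comm_ring_1 \<Rightarrow> nat \<Rightarrow> 'b \<Rightarrow> 'b" where
  "useq s n z = (\<Sum>k\<le>n. of_nat (n choose k) * z ^ (n - k) * bseq s k)"

lemma useq_stepA:
  fixes s z :: "'b::comm_ring_1"
  shows "useq s (Suc n) z = z * useq s n z + (\<Sum>k\<le>n. of_nat (n choose k) * z ^ (n - k) * bseq s (Suc k))"
proof -
  have "useq s (Suc n) z = z ^ Suc n + (\<Sum>k\<le>n. of_nat (Suc n choose Suc k) * z ^ (n - k) * bseq s (Suc k))"
    unfolding useq_def by (subst sum.atMost_Suc_shift) simp
  also have "(\<Sum>k\<le>n. of_nat (Suc n choose Suc k) * z ^ (n - k) * bseq s (Suc k))
     = (\<Sum>k\<le>n. of_nat (n choose k) * z ^ (n - k) * bseq s (Suc k))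
       + (\<Sum>k\<le>n. of_nat (n choose Suc k) * z ^ (n - k) * bseq s (Suc k))"
    by (simp add: sum.distrib distrib_right)
  finally have e1: "useq s (Suc n) z = z ^ Suc n + ((\<Sum>k\<le>n. of_nat (n choose k) * z ^ (n - k) * bseq s (Suc k))
       + (\<Sum>k\<le>n. of_nat (n choose Suc k) * z ^ (n - k) * bseq s (Suc k)))" .
  moreover have zu: "z ^ Suc n + (\<Sum>k\<le>n. of_nat (n choose Suc k) * z ^ (n - k) * bseq s (Suc k))
      = z * useq s n z"
  proof -
    have "z * useq s n z = (\<Sum>k\<le>n. of_nat (n choose k) * z ^ (Suc n - k) * bseq s k)"
      unfolding useq_def sum_distrib_left
      by (intro sum.cong refl) (simp add: Suc_diff_le mult_ac)
    also have "\<dots> = (\<Sum>k\<le>Suc n. of_nat (n choose k) * z ^ (Suc n - k) * bseq s k)"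
      by (simp add: binomial_eq_0)
    also have "\<dots> = z ^ Suc n + (\<Sum>k\<le>n. of_nat (n choose Suc k) * z ^ (n - k) * bseq s (Suc k))"
      by (subst sum.atMost_Suc_shift) (simp add: binomial_eq_0)
    finally show ?thesis by simp
  qed
  ultimately show ?thesis by (simp add: add_ac)
qed

lemma useq_stepB:
  fixes s z :: "'b::comm_ring_1"
  shows "useq s n (z + s) = (\<Sum>k\<le>n. of_nat (n choose k) * z ^ (n - k) * bseq s (Suc k))"
proof -
  define f where "f = (\<lambda>k i. of_nat (n choose k) * of_nat ((n - k) choose i) * z ^ i * s ^ (n - k - i) * bseq s k :: 'b)"
  have L: "useq s n (z + s) = (\<Sum>k\<le>n. \<Sum>i\<le>n-k. f k i)"
    unfolding useq_def f_def binomial_ring sum_distrib_left sum_distrib_right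
    by (intro sum.cong refl) (simp add: mult_ac)
  have R: "(\<Sum>k\<le>n. of_nat (n choose k) * z ^ (n - k) * bseq s (Suc k))
        = (\<Sum>j\<le>n. \<Sum>k\<le>j. of_nat (n choose j) * of_nat (j choose k) * z ^ (n - j) * s ^ (j - k) * bseq s k)"
    by (simp add: sum_distrib_left sum_distrib_right mult_ac)
  have L2: "(\<Sum>k\<le>n. \<Sum>i\<le>n-k. f k i) = (\<Sum>(k,i)\<in>(SIGMA k:{..n}. {..n-k}). f k i)"
    by (rule sum.Sigma) auto
  have R2: "(\<Sum>j\<le>n. \<Sum>k\<le>j. of_nat (n choose j) * of_nat (j choose k) * z ^ (n - j) * s ^ (j - k) * bseq s k)
     = (\<Sum>(j,k)\<in>(SIGMA j:{..n}. {..j}). of_nat (n choose j) * of_nat (j choose k) * z ^ (n - j) * s ^ (j - k) * bseq s k)"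
    by (rule sum.Sigma) auto
  have M: "(\<Sum>(k,i)\<in>(SIGMA k:{..n}. {..n-k}). f k i)
     = (\<Sum>(j,k)\<in>(SIGMA j:{..n}. {..j}). of_nat (n choose j) * of_nat (j choose k) * z ^ (n - j) * s ^ (j - k) * bseq s k)"
  proof (rule sum.reindex_bij_witness[where i = "\<lambda>(j,k). (k, n - j)" and j = "\<lambda>(k,i). (n - i, k)"])
    fix a assume a: "a \<in> (SIGMA k:{..n}. {..n-k})"
    obtain k i where ki: "a = (k,i)" "k \<le> n" "i \<le> n - k" using a by auto
    have c: "(n choose (n - i)) * ((n - i) choose k) = (n choose k) * ((n - k) choose i)"
    proof -
      have "(n choose (n - i)) * ((n - i) choose k) = (n choose k) * ((n - k) choose (n - i - k))"
        using ki by (intro choose_mult) auto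
      also have "(n - k) choose (n - i - k) = (n - k) choose i"
        using ki by (subst binomial_symmetric) (auto simp: algebra_simps)
      finally show ?thesis .
    qed
    have "of_nat (n choose (n - i)) * of_nat ((n - i) choose k) = (of_nat ((n choose k) * ((n - k) choose i)) :: 'b)"
      by (simp only: of_nat_mult [symmetric] c)
    then show "(case (case a of (k, i) \<Rightarrow> (n - i, k)) of (j, k) \<Rightarrow> of_nat (n choose j) * of_nat (j choose k) * z ^ (n - j) * s ^ (j - k) * bseq s k) = (case a of (k, i) \<Rightarrow> f k i)"
      using ki unfolding f_def
      by (simp add: algebra_simps) (metis mult.assoc)
  qed auto
  show ?thesis using L L2 M R2 R by simp
qed

lemma useq_step:
  fixes s z :: "'b::comm_ring_1"
  shows "useq s n (z + s) + z * useq s n z = useq s (Suc n) z"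
  using useq_stepA[of s n z] useq_stepB[of s n z] by simp

lemma of_nat_choose_prime_0:
  assumes "prime p" "of_nat p = (0::'b::comm_ring_1)" "0 < k" "k < p"
  shows "(of_nat (p choose k) :: 'b) = 0"
proof -
  have "p dvd (p choose k)" using assms by (intro dvd_choose_prime) auto
  then obtain m where "p choose k = p * m" by blast
  then show ?thesis using assms(2) by simp
qed

lemma useq_prime:
  fixes s z :: "'b::comm_ring_1"
  assumes "prime p" "of_nat p = (0::'b)"
  shows "useq s p z = z ^ p + bseq s p"
proof -
  have p0: "p > 0" using assms prime_gt_0_nat by blast
  have "useq s p z = (\<Sum>k\<in>{0,p}. of_nat (p choose k) * z ^ (p - k) * bseq s k)"
    unfolding useq_def
  proof (rule sum.mono_neutral_right)
    show "\<forall>i\<in>{..p} - {0, p}. of_nat (p choose i) * z ^ (p - i) * bseq s i = 0"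
      using of_nat_choose_prime_0[OF assms] by auto
  qed auto
  also have "\<dots> = z ^ p + bseq s p" using p0 by simp
  finally show ?thesis .
qed

lemma V_ident:
  fixes s z :: "'b::comm_ring_1"
  assumes "prime p" "of_nat p = (0::'b)"
  shows "(\<Sum>j<p. z ^ (p - 1 - j) * useq s j z) = bseq s (p - 1)"
proof -
  have p0: "p > 0" using assms prime_gt_0_nat by blast
  define g where "g = (\<lambda>j k. of_nat (j choose k) * z ^ (p - 1 - k) * bseq s k :: 'b)"
  have "(\<Sum>j<p. z ^ (p - 1 - j) * useq s j z) = (\<Sum>j\<in>{..<p}. \<Sum>k\<in>{k\<in>{..<p}. k \<le> j}. g j k)"
  proof (intro sum.cong refl)
    fix j assume j: "j \<in> {..<p}"
    have e: "{k\<in>{..<p}. k \<le> j} = {..j}" using j by auto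
    show "z ^ (p - 1 - j) * useq s j z = (\<Sum>k\<in>{k\<in>{..<p}. k \<le> j}. g j k)"
      unfolding e useq_def g_def sum_distrib_left
    proof (intro sum.cong refl)
      fix k assume k: "k \<in> {..j}"
      have "z ^ (p - 1 - j) * z ^ (j - k) = z ^ (p - 1 - k)"
        using j k by (simp add: power_add[symmetric])
      then show "z ^ (p - 1 - j) * (of_nat (j choose k) * z ^ (j - k) * bseq s k) =
          of_nat (j choose k) * z ^ (p - 1 - k) * bseq s k"
        by (metis mult.assoc mult.left_commute)
    qed
  qed
  also have "\<dots> = (\<Sum>k\<in>{..<p}. \<Sum>j\<in>{j\<in>{..<p}. k \<le> j}. g j k)"
    by (rule sum.swap_restrict) auto
  also have "\<dots> = (\<Sum>k\<in>{..<p}. of_nat (p choose Suc k) * z ^ (p - 1 - k) * bseq s k)"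
  proof (intro sum.cong refl)
    fix k assume k: "k \<in> {..<p}"
    have "(\<Sum>j\<in>{j\<in>{..<p}. k \<le> j}. (j choose k)) = (\<Sum>j\<le>p - 1. (j choose k))"
    proof (rule sum.mono_neutral_left)
      show "\<forall>i\<in>{..p - 1} - {j \<in> {..<p}. k \<le> j}. i choose k = 0"
        using p0 by auto
    qed (use p0 in auto)
    also have "\<dots> = p choose Suc k"
      using sum_choose_upper[of k "p - 1"] p0 by simp
    finally have "(\<Sum>j\<in>{j\<in>{..<p}. k \<le> j}. (j choose k)) = p choose Suc k" .
    then show "(\<Sum>j\<in>{j\<in>{..<p}. k \<le> j}. g j k) = of_nat (p choose Suc k) * z ^ (p - 1 - k) * bseq s k"
      unfolding g_def by (simp flip: sum_distrib_right of_nat_sum)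
  qed
  also have "\<dots> = (\<Sum>k\<in>{p - 1}. of_nat (p choose Suc k) * z ^ (p - 1 - k) * bseq s k)"
  proof (rule sum.mono_neutral_right)
    show "\<forall>i\<in>{..<p} - {p - 1}. of_nat (p choose Suc i) * z ^ (p - 1 - i) * bseq s i = 0"
    proof
      fix i assume "i \<in> {..<p} - {p - 1}"
      then have "0 < Suc i" "Suc i < p" by auto
      then show "of_nat (p choose Suc i) * z ^ (p - 1 - i) * bseq s i = 0"
        using of_nat_choose_prime_0[OF assms] by simp
    qed
  qed (use p0 in auto)
  also have "\<dots> = bseq s (p - 1)" using p0 by simp
  finally show ?thesis .
qed



lemma bseq_const: "bseq [:s:] k = [:bseq s k:]"
proof (induction k rule: less_induct)
  case (less k)
  show ?case
  proof (cases k)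
    case 0 then show ?thesis by (simp add: one_pCons)
  next
    case (Suc m)
    have "bseq [:s:] k = (\<Sum>j\<le>m. [:of_nat (m choose j) * s ^ (m - j) * bseq s j:])"
      unfolding Suc bseq.simps
      by (intro sum.cong refl) (use Suc less in \<open>simp add: of_nat_poly poly_const_pow\<close>)
    also have "\<dots> = [:bseq s k:]" unfolding sum_to_poly Suc by simp
    finally show ?thesis .
  qed
qed

lemma cong_useq:
  assumes "[x = y] (mod M)"
  shows "[useq S n x = useq S n (y :: 'a::field poly)] (mod M)"
  unfolding useq_def
  by (intro cong_sum cong_mult cong_pow cong_refl assms)

lemma carlitz_T_cong:
  assumes "[x = y] (mod M)"
  shows "[carlitz_T Q x = carlitz_T Q (y :: 'a::field poly)] (mod M)"
  unfolding carlitz_T_def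
  by (intro cong_add cong_mult cong_pow cong_refl assms)

lemma carlitz_special:
  fixes \<alpha> \<beta> :: "'a::field"
  assumes "p \<ge> 2"
  shows "carlitz Q (monom 1 p - monom \<alpha> 1 - monom \<beta> 0) x
     = (carlitz_T Q ^^ p) x - smult \<alpha> (carlitz_T Q x) - smult \<beta> x"
proof -
  let ?N = "monom 1 p - monom \<alpha> 1 - monom \<beta> 0 :: 'a poly"
  have c: "coeff ?N i = (if i = p then 1 else 0) - (if i = 1 then \<alpha> else 0) - (if i = 0 then \<beta> else 0)" for i
    by (simp add: coeff_monom)
  have d: "degree ?N = p"
  proof (rule order_antisym)
    show "degree ?N \<le> p"
      by (intro degree_le allI impI) (use assms in \<open>simp add: c\<close>)
    show "p \<le> degree ?N"
      by (rule le_degree) (use assms in \<open>simp add: c\<close>)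
  qed
  have "carlitz Q ?N x = (\<Sum>i\<le>p. smult (if i = p then 1 else 0) ((carlitz_T Q ^^ i) x)
        - smult (if i = 1 then \<alpha> else 0) ((carlitz_T Q ^^ i) x)
        - smult (if i = 0 then \<beta> else 0) ((carlitz_T Q ^^ i) x))"
    unfolding carlitz_def d c by (simp add: smult_diff_left)
  also have "\<dots> = (carlitz_T Q ^^ p) x - smult \<alpha> (carlitz_T Q x) - smult \<beta> x"
    using assms by (simp add: sum_subtractf if_distrib[of "\<lambda>c. smult c _"] cong: if_cong)
  finally show ?thesis .
qed



lemma frob_add_poly:
  fixes x y :: "'a::{finite,field} poly"
  assumes "CHAR('a) = p" "prime p"
  shows "(x + y) ^ (p ^ k) = x ^ (p ^ k) + y ^ (p ^ k)"
  by (rule freshmans_dream') (use assms in auto)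

lemma frob_diff_poly:
  fixes x y :: "'a::{finite,field} poly"
  assumes "CHAR('a) = p" "prime p"
  shows "(x - y) ^ (p ^ k) = x ^ (p ^ k) - y ^ (p ^ k)"
  using frob_add_poly[OF assms, of "x - y" y k] by (simp add: algebra_simps)

lemma frob_sum_poly:
  fixes f :: "'b \<Rightarrow> 'a::{finite,field} poly"
  assumes "CHAR('a) = p" "prime p"
  shows "(sum f A) ^ (p ^ k) = (\<Sum>i\<in>A. f i ^ (p ^ k))"
  by (rule freshmans_dream_sum') (use assms in auto)

lemma useq_frob:
  fixes z :: "'a::{finite,field} poly"
  assumes "CHAR('a) = p" "prime p" "\<And>c::'a. c ^ (p ^ k) = c"
  shows "(useq [:s:] n z) ^ (p ^ k) = useq [:s:] n (z ^ (p ^ k))"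
proof -
  have cst: "[:c:] ^ (p ^ k) = [:c:]" for c :: 'a
    by (simp add: poly_const_pow assms(3))
  show ?thesis
    unfolding useq_def frob_sum_poly[OF assms(1,2)]
  proof (intro sum.cong refl)
    fix j assume "j \<in> {..n}"
    have "(of_nat (n choose j) :: 'a poly) ^ (p ^ k) = of_nat (n choose j)"
      by (simp add: of_nat_poly cst)
    moreover have "(z ^ (n - j)) ^ (p ^ k) = (z ^ (p ^ k)) ^ (n - j)"
      by (simp add: power_mult[symmetric] mult.commute)
    moreover have "(bseq [:s:] j) ^ (p ^ k) = bseq [:s:] j"
      by (simp add: bseq_const cst)
    ultimately show "(of_nat (n choose j) * z ^ (n - j) * bseq [:s:] j) ^ (p ^ k) =
         of_nat (n choose j) * (z ^ (p ^ k)) ^ (n - j) * bseq [:s:] j"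
      by (simp add: power_mult_distrib)
  qed
qed



lemma const_dvd_by_prime:
  fixes P :: "'a::field poly"
  assumes "prime_elem P" "P dvd [:c:]"
  shows "c = 0"
proof (rule ccontr)
  assume "c \<noteq> 0"
  then have "[:c:] dvd 1" by (simp add: is_unit_triv)
  then have "P dvd 1" using assms(2) dvd_trans by blast
  then show False using prime_elem_not_unit[OF assms(1)] by simp
qed

lemma ring_aux:
  fixes t Bp P h Bq A Bb :: "'b::comm_ring_1"
  shows "(t ^ p + Bp + P * (- h * Bq)) - A * (t + 1 + P * (- h)) - (Bb + 1)
    = (t ^ p - A * t - Bb) + ((Bp - A - 1) - P * h * (Bq - A))"
  by (simp add: algebra_simps)

lemma smult_const: "smult a p = [:a:] * p"
  by simp

lemma wieferich_char:
  fixes P h :: "'a::{finite,field} poly" and \<alpha> b s :: 'a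
  assumes ch: "CHAR('a) = p" and pp: "prime p" and k: "k > 0"
    and cQ: "\<And>c::'a. c ^ (p ^ k) = c"
    and Pdef: "P = [:0,1:] ^ p - [:\<alpha>:] * [:0,1:] - [:b:]"
    and hQ: "P ^ 2 dvd [:0,1:] ^ (p ^ k) - ([:0,1:] + [:s:] + P * h)"
    and ha: "P dvd [:\<alpha>:] * h - 1"
    and pe: "prime_elem P"
  shows "carlitz_wieferich_cong (p ^ k) P \<longleftrightarrow> (bseq s p = \<alpha> + 1 \<and> bseq s (p - 1) = \<alpha>)"
proof -
  define X where "X = ([:0,1:] :: 'a poly)"
  define Q where "Q = p ^ k"
  define \<theta> where "\<theta> = X + P * h"
  define S where "S = ([:s:] :: 'a poly)"
  define L where "L = (carlitz_T Q :: 'a poly \<Rightarrow> 'a poly)"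
  define w where "w n = - h * (\<Sum>j<n. \<theta> ^ (n - 1 - j) * useq S j \<theta>)" for n
  have p2: "p \<ge> 2" using pp prime_ge_2_nat by blast
  have "p ^ 1 \<le> p ^ k" by (rule power_increasing) (use k p2 in auto)
  then have "p \<le> Q" unfolding Q_def by simp
  then have Q2: "2 \<le> Q" using p2 by linarith
  have PQ: "P ^ 2 dvd P ^ Q" using Q2 by (rule le_imp_power_dvd)
  have Pp: "P ^ 2 dvd P ^ p" using p2 by (rule le_imp_power_dvd)
  have p0a: "(of_nat p :: 'a) = 0"
    using of_nat_CHAR[where 'a='a] unfolding ch .
  have p0: "(of_nat p :: 'a poly) = 0"
    using p0a by (simp add: of_nat_poly)
  have P0: "P \<noteq> 0" using pe by auto
  have thQ: "[\<theta> ^ Q = \<theta> + S] (mod P ^ 2)"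
  proof -
    have e: "\<theta> ^ Q = X ^ Q + P ^ Q * h ^ Q"
      unfolding \<theta>_def Q_def frob_add_poly[OF ch pp] by (simp add: power_mult_distrib)
    have c1: "[X ^ Q = X + S + P * h] (mod P ^ 2)"
      using hQ unfolding X_def S_def Q_def cong_iff_dvd_diff .
    have c2: "[P ^ Q * h ^ Q = 0] (mod P ^ 2)"
      unfolding cong_0_iff using PQ by (rule dvd_mult2)
    have "[\<theta> ^ Q = X + S + P * h + 0] (mod P ^ 2)"
      unfolding e by (intro cong_add c1 c2)
    then show ?thesis unfolding \<theta>_def by (simp add: algebra_simps)
  qed
  have main: "[(L ^^ n) 1 = useq S n \<theta> + P * w n] (mod P ^ 2)" for n
  proof (induction n)
    case 0
    show ?case by (simp add: useq_def w_def)
  next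
    case (Suc n)
    define u where "u = useq S n \<theta>"
    have c0: "[(L ^^ Suc n) 1 = L (u + P * w n)] (mod P ^ 2)"
      using carlitz_T_cong[OF Suc.IH, of Q] unfolding L_def u_def by simp
    have e1: "L (u + P * w n) = u ^ Q + P ^ Q * (w n) ^ Q + \<theta> * u + P * (\<theta> * w n - h * u) - P ^ 2 * h * w n"
    proof -
      have XP: "[:0,1:] = \<theta> - P * h" by (simp add: \<theta>_def X_def)
      show ?thesis
        unfolding L_def carlitz_T_def Q_def frob_add_poly[OF ch pp] XP
        by (simp add: power_mult_distrib algebra_simps power2_eq_square)
    qed
    have c1: "[u ^ Q = useq S n (\<theta> + S)] (mod P ^ 2)"
      unfolding u_def S_def Q_def useq_frob[OF ch pp cQ]
      by (rule cong_useq) (use thQ in \<open>simp add: Q_def S_def\<close>)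
    have c2: "[P ^ Q * (w n) ^ Q - P ^ 2 * h * w n = 0] (mod P ^ 2)"
      unfolding cong_0_iff using PQ by (intro dvd_diff dvd_mult2) auto
    have ws: "w (Suc n) = \<theta> * w n - h * u"
    proof -
      have "(\<Sum>j<Suc n. \<theta> ^ (Suc n - 1 - j) * useq S j \<theta>)
          = \<theta> * (\<Sum>j<n. \<theta> ^ (n - 1 - j) * useq S j \<theta>) + u"
        unfolding sum_distrib_left u_def
      proof (subst sum.lessThan_Suc, intro arg_cong2[where f = "(+)"] sum.cong refl)
        fix j assume "j \<in> {..<n}"
        then have "Suc (n - 1 - j) = Suc n - 1 - j" by auto
        then show "\<theta> ^ (Suc n - 1 - j) * useq S j \<theta> = \<theta> * (\<theta> ^ (n - 1 - j) * useq S j \<theta>)"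
          by (metis mult.assoc power_Suc)
      qed simp
      then show ?thesis unfolding w_def by (simp add: algebra_simps)
    qed
    have e2: "useq S (Suc n) \<theta> + P * w (Suc n) = useq S n (\<theta> + S) + \<theta> * u + P * (\<theta> * w n - h * u)"
      using useq_step[of S n \<theta>] unfolding ws u_def by simp
    have "[L (u + P * w n) = (useq S n (\<theta> + S) + \<theta> * u + P * (\<theta> * w n - h * u)) + 0] (mod P ^ 2)"
    proof -
      have "L (u + P * w n) = (u ^ Q + \<theta> * u + P * (\<theta> * w n - h * u)) + (P ^ Q * (w n) ^ Q - P ^ 2 * h * w n)"
        unfolding e1 by (simp add: algebra_simps)
      moreover have "[(u ^ Q + \<theta> * u + P * (\<theta> * w n - h * u)) + (P ^ Q * (w n) ^ Q - P ^ 2 * h * w n)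
          = (useq S n (\<theta> + S) + \<theta> * u + P * (\<theta> * w n - h * u)) + 0] (mod P ^ 2)"
        by (intro cong_add c1 c2 cong_refl)
      ultimately show ?thesis by simp
    qed
    then show ?case using c0 e2 by (auto intro: cong_trans)
  qed
  have Pm1: "P - 1 = monom 1 p - monom \<alpha> 1 - monom (b + 1) 0"
    unfolding Pdef by (simp add: monom_altdef algebra_simps one_pCons)
  have sumE: "carlitz Q (P - 1) 1 = (L ^^ p) 1 - smult \<alpha> ((L ^^ 1) 1) - smult (b + 1) 1"
    unfolding Pm1 L_def carlitz_special[OF p2] by simp
  have u0: "useq S 0 \<theta> = 1" by (simp add: useq_def)
  have u1: "useq S 1 \<theta> = \<theta> + 1" by (simp add: useq_def)
  have w1: "w 1 = - h" by (simp add: w_def u0)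
  have up: "useq S p \<theta> = \<theta> ^ p + [:bseq s p:]"
    using useq_prime[OF pp p0] by (simp add: S_def bseq_const)
  have wp: "w p = - h * [:bseq s (p - 1):]"
    unfolding w_def V_ident[OF pp p0] by (simp add: S_def bseq_const)
  define C where "C = [:bseq s p:] - [:\<alpha>:] - 1"
  define D where "D = [:bseq s (p - 1):] - [:\<alpha>:]"
  have Pth: "[\<theta> ^ p - [:\<alpha>:] * \<theta> - [:b:] = 0] (mod P ^ 2)"
  proof -
    have thp: "(X + P * h) ^ p = X ^ p + P ^ p * h ^ p"
      using frob_add_poly[OF ch pp, of X "P * h" 1] by (simp add: power_mult_distrib)
    have XpP: "X ^ p = P + [:\<alpha>:] * X + [:b:]" by (simp add: Pdef X_def)
    have "\<theta> ^ p - [:\<alpha>:] * \<theta> - [:b:] = X ^ p + P ^ p * h ^ p - [:\<alpha>:] * (X + P * h) - [:b:]"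
      by (simp only: thp \<theta>_def)
    also have "\<dots> = P * (1 - [:\<alpha>:] * h) + P ^ p * h ^ p"
      unfolding XpP by (simp add: algebra_simps)
    finally have e: "\<theta> ^ p - [:\<alpha>:] * \<theta> - [:b:] = P * (1 - [:\<alpha>:] * h) + P ^ p * h ^ p" .
    have "P dvd 1 - [:\<alpha>:] * h" using ha by (simp add: dvd_diff_commute)
    then have "P * P dvd P * (1 - [:\<alpha>:] * h)" by (rule mult_dvd_mono[OF dvd_refl])
    then have "P ^ 2 dvd P * (1 - [:\<alpha>:] * h)" by (simp add: power2_eq_square)
    moreover have "P ^ 2 dvd P ^ p * h ^ p" using Pp by (rule dvd_mult2)
    ultimately show ?thesis unfolding e cong_0_iff by (rule dvd_add)
  qed
  have key: "[carlitz Q (P - 1) 1 = 0 + (C - P * h * D)] (mod P ^ 2)"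
  proof -
    have "[carlitz Q (P - 1) 1 = (useq S p \<theta> + P * w p) - smult \<alpha> (useq S 1 \<theta> + P * w 1) - smult (b + 1) 1] (mod P ^ 2)"
      unfolding sumE smult_const
      by (intro cong_diff cong_mult cong_refl main)
    moreover have "(useq S p \<theta> + P * w p) - smult \<alpha> (useq S 1 \<theta> + P * w 1) - smult (b + 1) 1
        = (\<theta> ^ p - [:\<alpha>:] * \<theta> - [:b:]) + (C - P * h * D)"
    proof -
      have sb: "[:b + 1:] * (1::'a poly) = [:b:] + 1" by (simp add: one_pCons)
      show ?thesis
        unfolding up wp u1 w1 C_def D_def smult_const sb
        by (rule ring_aux)
    qed
    moreover have "[(\<theta> ^ p - [:\<alpha>:] * \<theta> - [:b:]) + (C - P * h * D) = 0 + (C - P * h * D)] (mod P ^ 2)"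
      by (intro cong_add Pth cong_refl)
    ultimately show ?thesis by (auto intro: cong_trans)
  qed
  have "carlitz_wieferich_cong (p ^ k) P \<longleftrightarrow> P ^ 2 dvd (C - P * h * D)"
    unfolding carlitz_wieferich_cong_def Q_def[symmetric]
    using cong_dvd_iff[OF key] by simp
  also have "\<dots> \<longleftrightarrow> (bseq s p = \<alpha> + 1 \<and> bseq s (p - 1) = \<alpha>)"
  proof
    assume "bseq s p = \<alpha> + 1 \<and> bseq s (p - 1) = \<alpha>"
    then show "P ^ 2 dvd (C - P * h * D)" by (simp add: C_def D_def one_pCons)
  next
    assume a: "P ^ 2 dvd (C - P * h * D)"
    then have "P dvd C - P * h * D" by (rule dvd_trans[rotated]) (simp add: power2_eq_square)
    moreover have "P dvd P * h * D" by (simp add: mult.assoc)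
    ultimately have "P dvd (C - P * h * D) + P * h * D" by (rule dvd_add)
    then have "P dvd C" by simp
    moreover have "C = [:bseq s p - \<alpha> - 1:]" by (simp add: C_def one_pCons)
    ultimately have cz: "bseq s p - \<alpha> - 1 = 0" using const_dvd_by_prime[OF pe] by metis
    then have C0: "C = 0" by (simp add: C_def one_pCons)
    have "P * P dvd P * (h * D)" using a unfolding C0 by (simp add: power2_eq_square mult.assoc)
    then have "P dvd h * D" using P0 by simp
    then have "P dvd h \<or> P dvd D" using prime_elem_dvd_mult_iff[OF pe] by blast
    moreover have "\<not> P dvd h"
    proof
      assume "P dvd h"
      then have "P dvd [:\<alpha>:] * h" by (rule dvd_mult)
      then have "P dvd [:\<alpha>:] * h - ([:\<alpha>:] * h - 1)" using ha by (rule dvd_diff)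
      then have "P dvd 1" by simp
      then show False using prime_elem_not_unit[OF pe] by simp
    qed
    ultimately have "P dvd D" by blast
    moreover have "D = [:bseq s (p - 1) - \<alpha>:]" by (simp add: D_def)
    ultimately have "bseq s (p - 1) - \<alpha> = 0" using const_dvd_by_prime[OF pe] by metis
    with cz show "bseq s p = \<alpha> + 1 \<and> bseq s (p - 1) = \<alpha>" by (simp add: algebra_simps)
  qed
  finally show ?thesis .
qed



lemma prime_elem_dvd_prod:
  assumes "prime_elem P" "finite A" "P dvd prod f A"
  shows "\<exists>x\<in>A. P dvd f x"
  using assms(2,3)
proof (induction A rule: finite_induct)
  case empty then show ?case using prime_elem_not_unit[OF assms(1)] by simp
next
  case (insert x A)
  then show ?case using prime_elem_dvd_mult_iff[OF assms(1)] by auto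
qed

lemma of_nat_card_0: "(of_nat CARD('a::{finite,field}) :: 'a) = 0"
proof -
  have "(\<Sum>x\<in>UNIV. x + 1) = (\<Sum>x\<in>UNIV. (x::'a))"
    by (rule sum.reindex_bij_witness[where i = "\<lambda>x. x - 1" and j = "\<lambda>x. x + 1"]) auto
  then show ?thesis by (simp add: sum.distrib)
qed

lemma CHAR_eq_p:
  assumes "prime p" "n > 0" "CARD('a::{finite,field}) = p ^ n"
  shows "CHAR('a) = p"
proof -
  have pc: "prime CHAR('a)"
    by (intro prime_CHAR_semidom finite_imp_CHAR_pos) auto
  have "(of_nat (p ^ n) :: 'a) = 0" using of_nat_card_0[where 'a='a] unfolding assms(3) .
  then have "CHAR('a) dvd p ^ n" by (simp only: of_nat_eq_0_iff_char_dvd)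
  then have "CHAR('a) dvd p" using pc prime_dvd_power by blast
  then show ?thesis using pc assms(1) primes_dvd_imp_eq by blast
qed

lemma field_power_card:
  fixes x :: "'a :: {finite,field}"
  shows "x ^ CARD('a) = x"
proof (cases "x = 0")
  case False
  have "x * (\<Prod>y\<in>UNIV-{0}. x * y) = x * x ^ (card (UNIV :: 'a set) - 1) * \<Prod>(UNIV-{0})"
    by (simp add: prod.distrib mult_ac)
  also have "x * x ^ (card (UNIV :: 'a set) - 1) = x ^ Suc (card (UNIV :: 'a set) - 1)"
    by (subst power_Suc) auto
  also have "Suc (card (UNIV :: 'a set) - 1) = card (UNIV :: 'a set)"
    using finite_UNIV_card_ge_0[where ?'a = 'a] by simp
  also have "(\<Prod>y\<in>UNIV-{0}. x * y) = (\<Prod>y\<in>UNIV-{0}. y)"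
    by (rule prod.reindex_bij_witness[of _ "\<lambda>y. y / x" "\<lambda>y. x * y"]) (use False in auto)
  finally show ?thesis
    by simp
qed (use finite_UNIV_card_ge_0[where ?'a = 'a] in auto)

lemma field_power_card_pow:
  fixes x :: "'a :: {finite,field}"
  shows "x ^ (CARD('a) ^ r) = x"
  by (induction r) (simp_all add: field_power_card power_mult)

lemma of_nat_pow_char:
  assumes "CHAR('a::{finite,field}) = p" "prime p"
  shows "(of_nat m :: 'a) ^ p = of_nat m"
proof (induction m)
  case 0 then show ?case using assms prime_gt_0_nat by simp
next
  case (Suc m)
  have "(of_nat m + 1 :: 'a) ^ p = of_nat m ^ p + 1 ^ p"
    by (rule freshmans_dream) (use assms in auto)
  then show ?case using Suc by (simp add: add.commute)
qed

lemma prod_linear_eq: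
  fixes f :: "'a::field poly"
  assumes "finite A" "card A = n" "degree f \<le> n" "coeff f n = 1" "\<And>z. z \<in> A \<Longrightarrow> poly f z = 0"
  shows "(\<Prod>a\<in>A. [:-a, 1:]) = f"
proof (rule poly_eqI_degree_lead_coeff[where A = A and n = n])
  have d: "degree (\<Prod>a\<in>A. [:-a, 1:]) = n"
    using assms(1,2) by (subst degree_prod_eq_sum_degree) auto
  have l: "lead_coeff (\<Prod>a\<in>A. [:-a, 1:]) = 1"
    by (simp add: lead_coeff_prod)
  show "coeff (\<Prod>a\<in>A. [:-a, 1:]) n = coeff f n" using d l assms(4) by simp
  show "degree (\<Prod>a\<in>A. [:-a, 1:]) \<le> n" using d by simp
  show "poly (\<Prod>a\<in>A. [:-a, 1:]) z = poly f z" if "z \<in> A" for z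
    using that assms(1,5) by (auto simp: poly_prod)
qed (use assms in auto)

lemma poly_X_pow_minus:
  fixes \<alpha> :: "'a::comm_ring_1"
  shows "poly ([:0,1:] ^ p - [:\<alpha>:] * [:0,1:]) z = z ^ p - \<alpha> * z"
  by simp

lemma X_pow_monom: "([:0,1:] :: 'a::comm_ring_1 poly) ^ p = monom 1 p"
  by (simp add: monom_altdef)

lemma coeff_X_pow_minus:
  fixes \<alpha> :: "'a::comm_ring_1"
  assumes "p \<ge> 2"
  shows "coeff ([:0,1:] ^ p - [:\<alpha>:] * [:0,1:]) i = (if i = p then 1 else 0) - (if i = 1 then \<alpha> else 0)"
  using assms by (simp add: X_pow_monom coeff_monom coeff_pCons split: nat.split)

lemma degree_X_pow_minus:
  fixes \<alpha> :: "'a::field"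
  assumes "p \<ge> 2"
  shows "degree ([:0,1:] ^ p - [:\<alpha>:] * [:0,1:]) \<le> p"
  by (intro degree_le allI impI) (use assms in \<open>simp only: coeff_X_pow_minus, simp\<close>)



lemma pcompose_X_pow: "pcompose ([:0,1:] ^ k) Y = (Y :: 'a::comm_ring_1 poly) ^ k"
  by (induction k) (simp_all add: pcompose_mult pcompose_pCons pcompose_1)

lemma coeff_X_pow_minus_p:
  fixes \<alpha> :: "'a::comm_ring_1"
  assumes "p \<ge> 2"
  shows "coeff ([:0,1:] ^ p - [:\<alpha>:] * [:0,1:]) p = 1"
  using assms by (simp add: X_pow_monom coeff_monom coeff_pCons split: nat.split)

locale Gsetup =
  fixes G :: "'a::{finite,field} set" and p n :: nat
  assumes pp: "prime p" and n0: "n > 0" and card_a: "CARD('a) = p ^ n"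
    and G0: "0 \<in> G" and Gadd: "\<And>a b. a \<in> G \<Longrightarrow> b \<in> G \<Longrightarrow> a + b \<in> G"
    and Gcard: "card G = p"
begin

lemma ch: "CHAR('a) = p"
  using CHAR_eq_p[OF pp n0 card_a] .

lemma p2: "p \<ge> 2"
  using pp prime_ge_2_nat by blast

lemma mult_in: "g \<in> G \<Longrightarrow> of_nat m * g \<in> G"
  by (induction m) (auto simp: G0 distrib_right intro: Gadd)

lemma ex_nonzero: "\<exists>c. c \<in> G \<and> c \<noteq> 0"
proof (rule ccontr)
  assume "\<not> ?thesis"
  then have "G \<subseteq> {0}" by auto
  then have "card G \<le> card {0::'a}" by (rule card_mono[rotated]) simp
  then have "card G \<le> 1" by simp
  then show False using Gcard p2 by simp
qed

definition gc :: 'a where "gc = (SOME c. c \<in> G \<and> c \<noteq> 0)"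
definition alpha :: 'a where "alpha = gc ^ (p - 1)"

lemma gc: "gc \<in> G" "gc \<noteq> 0"
  using someI_ex[OF ex_nonzero] unfolding gc_def by auto

lemma G_multiples:
  assumes "g \<in> G" "g \<noteq> 0"
  shows "G = (\<lambda>m. of_nat m * g) ` {..<p}"
proof -
  have inj: "inj_on (\<lambda>m. of_nat m * g) {..<p}"
  proof (rule inj_onI)
    fix x y assume xy: "x \<in> {..<p}" "y \<in> {..<p}" "of_nat x * g = of_nat y * g"
    then have "(of_nat x :: 'a) = of_nat y" using assms(2) by simp
    then have "[x = y] (mod CHAR('a))" by (simp only: of_nat_eq_iff_cong_CHAR)
    then show "x = y" using xy ch cong_less_modulus_unique_nat by auto
  qed
  have sub: "(\<lambda>m. of_nat m * g) ` {..<p} \<subseteq> G" using mult_in assms(1) by auto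
  have "card ((\<lambda>m. of_nat m * g) ` {..<p}) = card G"
    using card_image[OF inj] Gcard by simp
  then show ?thesis using sub card_subset_eq[of G] by auto
qed

lemma root: "x \<in> G \<Longrightarrow> x ^ p = alpha * x"
proof -
  assume "x \<in> G"
  then obtain m where m: "x = of_nat m * gc" using G_multiples[OF gc] by auto
  have "x ^ p = of_nat m ^ p * gc ^ p" unfolding m by (simp add: power_mult_distrib)
  also have "\<dots> = of_nat m * gc ^ p" using of_nat_pow_char[OF ch pp] by simp
  also have "gc ^ p = gc ^ (p - 1) * gc"
  proof -
    have "gc ^ p = gc ^ Suc (p - 1)" using p2 by simp
    also have "\<dots> = gc ^ (p - 1) * gc" by (rule power_Suc2)
    finally show ?thesis .
  qed
  finally show ?thesis unfolding m alpha_def by (simp add: mult_ac)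
qed

lemma prodG: "(\<Prod>g\<in>G. [:-g, 1:]) = [:0,1:] ^ p - [:alpha:] * [:0,1:]"
proof (rule prod_linear_eq[where n = p])
  show "finite G" by simp
  show "card G = p" by (rule Gcard)
  show "degree ([:0,1:] ^ p - [:alpha:] * [:0,1:]) \<le> p" using degree_X_pow_minus[OF p2] .
  show "coeff ([:0,1:] ^ p - [:alpha:] * [:0,1:]) p = 1" using coeff_X_pow_minus_p[OF p2] .
  show "poly ([:0,1:] ^ p - [:alpha:] * [:0,1:]) z = 0" if "z \<in> G" for z
    using root[OF that] by simp
qed

lemma prodG_comp: "(\<Prod>g\<in>G. Y - [:g:]) = Y ^ p - [:alpha:] * Y"
proof -
  have "pcompose (\<Prod>g\<in>G. [:-g, 1:]) Y = pcompose ([:0,1:] ^ p - [:alpha:] * [:0,1:]) Y"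
    by (simp only: prodG)
  moreover have "pcompose (\<Prod>g\<in>G. [:-g, 1:]) Y = (\<Prod>g\<in>G. Y - [:g:])"
    unfolding pcompose_prod by (intro prod.cong refl) (simp add: pcompose_pCons)
  moreover have "pcompose ([:0,1:] ^ p - [:alpha:] * [:0,1:]) Y = Y ^ p - [:alpha:] * Y"
    by (simp add: pcompose_diff pcompose_mult pcompose_X_pow pcompose_pCons)
  ultimately show ?thesis by simp
qed

lemma shape:
  assumes "lead_coeff P = 1" "degree P = p" "G_fixed G P"
  shows "P = [:0,1:] ^ p - [:alpha:] * [:0,1:] - [:- coeff P 0:]"
proof -
  have "P = [:0,1:] ^ p - [:alpha:] * [:0,1:] + [:coeff P 0:]"
  proof (rule poly_eqI_degree_lead_coeff[where A = G and n = p])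
    show "coeff P p = coeff ([:0,1:] ^ p - [:alpha:] * [:0,1:] + [:coeff P 0:]) p"
      using assms(1,2) coeff_X_pow_minus_p[OF p2, of alpha] p2 by (simp only: coeff_add) (simp add: coeff_pCons split: nat.split)
    show "p \<le> card G" using Gcard by simp
    show "degree P \<le> p" using assms(2) by simp
    show "degree ([:0,1:] ^ p - [:alpha:] * [:0,1:] + [:coeff P 0:]) \<le> p"
      using degree_add_le[OF degree_X_pow_minus[OF p2], of "[:coeff P 0:]"] by simp
    show "poly P z = poly ([:0,1:] ^ p - [:alpha:] * [:0,1:] + [:coeff P 0:]) z" if "z \<in> G" for z
    proof -
      have "pcompose P [:z, 1:] = P" using assms(3) that unfolding G_fixed_def by blast
      moreover have "poly (pcompose P [:z, 1:]) 0 = poly P z" by (simp add: poly_pcompose)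
      ultimately have "poly P z = poly P 0" by simp
      then show ?thesis using root[OF that] by (simp add: poly_0_coeff_0)
    qed
  qed
  moreover have m: "[:- coeff P 0:] = - [:coeff P 0:]" by simp
  ultimately show ?thesis by (simp only: m diff_minus_eq_add)
qed

end



context Gsetup
begin

lemma data:
  fixes P :: "'a poly"
  assumes "lead_coeff P = 1" "irreducible P" "G_fixed G P" "degree P = p"
  shows "\<exists>b g h. P = [:0,1:] ^ p - [:alpha:] * [:0,1:] - [:b:] \<and> g \<in> G \<and> g \<noteq> 0 \<and>
     P dvd [:alpha:] * h - 1 \<and>
     (\<forall>r>0. P ^ 2 dvd [:0,1:] ^ (CARD('a) ^ r) - ([:0,1:] + [:of_nat r * g:] + P * h))"
proof -
  define X where "X = ([:0,1:] :: 'a poly)"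
  define q where "q = CARD('a)"
  define b where "b = - coeff P 0"
  have Pdef: "P = X ^ p - [:alpha:] * X - [:b:]"
    using shape[OF assms(1,4,3)] unfolding X_def b_def .
  have pe: "prime_elem P" using assms(2) by (intro field_poly_irreducible_imp_prime) simp
  have P0: "P \<noteq> 0" using pe by auto
  have q: "q = p ^ n" using card_a q_def by simp
  have "p ^ 1 \<le> p ^ n" by (rule power_increasing) (use n0 p2 in auto)
  then have q2: "q \<ge> 2" using q p2 by simp
  have fq: "(x + y) ^ q = x ^ q + y ^ q" for x y :: "'a poly"
    unfolding q by (rule frob_add_poly[OF ch pp])
  have fqd: "(x - y) ^ q = x ^ q - y ^ q" for x y :: "'a poly"
    unfolding q by (rule frob_diff_poly[OF ch pp])
  have fp: "(x + y) ^ p = x ^ p + y ^ p" for x y :: "'a poly"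
    using frob_add_poly[OF ch pp, of x y 1] by simp
  have fpd: "(x - y) ^ p = x ^ p - y ^ p" for x y :: "'a poly"
    using frob_diff_poly[OF ch pp, of x y 1] by simp
  have cq: "[:c:] ^ q = [:c:]" for c :: 'a
    by (simp add: poly_const_pow q_def field_power_card)
  have Pq: "P ^ q = (X ^ q) ^ p - [:alpha:] * X ^ q - [:b:]"
  proof -
    have "P ^ q = (X ^ p) ^ q - ([:alpha:] * X) ^ q - [:b:] ^ q"
      unfolding Pdef fqd ..
    also have "\<dots> = (X ^ q) ^ p - [:alpha:] * X ^ q - [:b:]"
    proof -
      have a1: "(X ^ p) ^ q = (X ^ q) ^ p" by (simp only: power_mult[symmetric] mult.commute)
      have a2: "([:alpha:] * X) ^ q = [:alpha:] * X ^ q" by (simp only: power_mult_distrib cq)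
      show ?thesis by (simp only: a1 a2 cq)
    qed
    finally show ?thesis .
  qed
  have diff: "(X ^ q) ^ p - [:alpha:] * X ^ q - [:b:] - P = (\<Prod>g\<in>G. (X ^ q - X) - [:g:])"
    unfolding prodG_comp fpd Pdef by (simp add: algebra_simps smult_diff_right)
  have "P dvd P ^ q - P" using q2 by (intro dvd_diff dvd_power) auto
  then have "P dvd (\<Prod>g\<in>G. (X ^ q - X) - [:g:])" unfolding diff[symmetric] Pq .
  then obtain g where g: "g \<in> G" "P dvd (X ^ q - X) - [:g:]"
    using prime_elem_dvd_prod[OF pe] by (meson finite)
  have g0: "g \<noteq> 0"
  proof
    assume "g = 0"
    then have dv: "P dvd X ^ q - [:1:] * X" using g(2) by simp
    have "(\<Prod>a\<in>(UNIV::'a set). [:-a, 1:]) = X ^ q - [:1:] * X"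
      unfolding X_def
    proof (rule prod_linear_eq[where n = q])
      show "finite (UNIV :: 'a set)" by simp
      show "card (UNIV :: 'a set) = q" by (simp add: q_def)
      show "degree ([:0,1:] ^ q - [:1:] * [:0,1:] :: 'a poly) \<le> q" using degree_X_pow_minus[OF q2] .
      show "coeff ([:0,1:] ^ q - [:1:] * [:0,1:] :: 'a poly) q = 1" using coeff_X_pow_minus_p[OF q2] .
      show "poly ([:0,1:] ^ q - [:1:] * [:0,1:]) z = 0" for z :: 'a
        by (simp add: q_def field_power_card)
    qed
    with dv have "P dvd (\<Prod>a\<in>(UNIV::'a set). [:-a, 1:])" by simp
    then obtain a where "P dvd [:-a, 1:]" using prime_elem_dvd_prod[OF pe] by (meson finite)
    then have "degree P \<le> degree [:-a, 1:]" by (intro dvd_imp_degree_le) auto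
    then show False using assms(4) p2 by simp
  qed
  define h where "h = ((X ^ q - X) - [:g:]) div P"
  have "P * h = (X ^ q - X) - [:g:]" unfolding h_def using g(2) by (rule dvd_mult_div_cancel)
  then have Xq: "X ^ q = X + [:g:] + P * h" by (simp add: algebra_simps)
  have ha: "P dvd [:alpha:] * h - 1"
  proof -
    have gp: "[:g:] ^ p = [:alpha:] * [:g:]" using root[OF g(1)] by (simp add: poly_const_pow)
    have e1: "(X + [:g:] + P * h) ^ p = X ^ p + [:alpha:] * [:g:] + P ^ p * h ^ p"
      unfolding fp gp by (simp add: power_mult_distrib)
    have XpP: "X ^ p = P + [:alpha:] * X + [:b:]" by (simp add: Pdef)
    have "P ^ q = (X + [:g:] + P * h) ^ p - [:alpha:] * (X + [:g:] + P * h) - [:b:]"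
      unfolding Pq Xq ..
    also have "\<dots> = P * (1 - [:alpha:] * h) + P ^ p * h ^ p"
      unfolding e1 XpP by (simp add: algebra_simps)
    finally have "P * (1 - [:alpha:] * h) = P ^ q - P ^ p * h ^ p" by simp
    moreover have "P ^ 2 dvd P ^ q - P ^ p * h ^ p"
      using q2 p2 by (intro dvd_diff dvd_mult2 le_imp_power_dvd) auto
    ultimately have "P * P dvd P * (1 - [:alpha:] * h)" by (simp add: power2_eq_square)
    then have "P dvd 1 - [:alpha:] * h" using P0 by simp
    then show ?thesis by (simp add: dvd_diff_commute)
  qed
  have iter: "P ^ 2 dvd X ^ (q ^ r) - (X + [:of_nat r * g:] + P * h)" if "r > 0" for r
    using that
  proof (induction r)
    case 0 then show ?case by simp
  next
    case (Suc r)
    show ?case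
    proof (cases "r = 0")
      case True then show ?thesis using Xq by simp
    next
      case False
      then have IH: "[X ^ (q ^ r) = X + [:of_nat r * g:] + P * h] (mod P ^ 2)"
        using Suc.IH by (simp add: cong_iff_dvd_diff)
      have e: "X ^ (q ^ Suc r) = (X ^ (q ^ r)) ^ q" by (simp add: power_mult[symmetric] mult.commute)
      have c0: "[(X ^ (q ^ r)) ^ q = (X + [:of_nat r * g:] + P * h) ^ q] (mod P ^ 2)"
        by (rule cong_pow[OF IH])
      have eq: "(X + [:of_nat r * g:] + P * h) ^ q = (X + [:g:] + [:of_nat r * g:] + P * h) + P ^ q * h ^ q"
        unfolding fq cq power_mult_distrib Xq by (simp add: algebra_simps)
      have c1: "[X + [:g:] + [:of_nat r * g:] + P * h = X + [:of_nat (Suc r) * g:] + P * h] (mod P ^ 2)"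
          by (simp add: algebra_simps)
      have c2: "[P ^ q * h ^ q = 0] (mod P ^ 2)"
          unfolding cong_0_iff using q2 by (intro dvd_mult2 le_imp_power_dvd)
      have c3: "[(X + [:g:] + [:of_nat r * g:] + P * h) + P ^ q * h ^ q = (X + [:of_nat (Suc r) * g:] + P * h) + 0] (mod P ^ 2)"
        by (rule cong_add[OF c1 c2])
      have "[X ^ (q ^ Suc r) = (X + [:of_nat (Suc r) * g:] + P * h) + 0] (mod P ^ 2)"
        unfolding e using cong_trans[OF c0[unfolded eq] c3] .
      then show ?thesis by (simp add: cong_iff_dvd_diff)
    qed
  qed
  show ?thesis
    using Pdef g g0 ha iter unfolding X_def q_def by blast
qed

lemma wief:
  fixes P h :: "'a poly"
  assumes "P = [:0,1:] ^ p - [:alpha:] * [:0,1:] - [:b:]"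
    and "P dvd [:alpha:] * h - 1" and "prime_elem P" and "r > 0"
    and "P ^ 2 dvd [:0,1:] ^ (CARD('a) ^ r) - ([:0,1:] + [:of_nat r * g:] + P * h)"
  shows "carlitz_wieferich_cong (CARD('a) ^ r) P \<longleftrightarrow>
     (bseq (of_nat r * g) p = alpha + 1 \<and> bseq (of_nat r * g) (p - 1) = alpha)"
proof -
  have e: "CARD('a) ^ r = p ^ (n * r)" by (simp add: card_a power_mult)
  have k: "n * r > 0" using n0 assms(4) by simp
  have cQ: "c ^ (p ^ (n * r)) = c" for c :: 'a
    using field_power_card_pow[of c r] unfolding e .
  show ?thesis unfolding e
    by (rule wieferich_char[OF ch pp k cQ assms(1) _ assms(2,3)]) (use assms(5) e in simp)
qed

end

theorem corollary5p4:
  fixes G :: "'a::{finite,field} set" and p n :: nat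
  assumes "prime p" and "n > 0" and "CARD('a) = p ^ n"
    and "0 \<in> G" and "\<And>a b. a \<in> G \<Longrightarrow> b \<in> G \<Longrightarrow> a + b \<in> G"
    and "\<And>a. a \<in> G \<Longrightarrow> - a \<in> G" and "card G = p"
    and "\<exists>P0. c_wieferich P0 \<and> G_fixed G P0 \<and> degree P0 = p"
  shows "\<forall>P::'a poly. lead_coeff P = 1 \<and> irreducible P \<and> G_fixed G P \<and> degree P = p \<longrightarrow>
           (\<exists>r\<in>{1..p-1}. carlitz_wieferich_cong (CARD('a) ^ r) P)"
proof (intro allI impI)
  fix P :: "'a poly"
  assume HP: "lead_coeff P = 1 \<and> irreducible P \<and> G_fixed G P \<and> degree P = p"
  interpret Gsetup G p n
    using assms(1-5,7) by unfold_locales auto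
  obtain P0 where P0: "c_wieferich P0" "G_fixed G P0" "degree P0 = p" using assms(8) by blast
  have P0': "lead_coeff P0 = 1" "irreducible P0" "carlitz_wieferich_cong CARD('a) P0"
    using P0(1) unfolding c_wieferich_def by auto
  obtain b0 g0 h0 where D0: "P0 = [:0,1:] ^ p - [:alpha:] * [:0,1:] - [:b0:]" "g0 \<in> G" "g0 \<noteq> 0"
     "P0 dvd [:alpha:] * h0 - 1"
     "\<forall>r>0. P0 ^ 2 dvd [:0,1:] ^ (CARD('a) ^ r) - ([:0,1:] + [:of_nat r * g0:] + P0 * h0)"
    using data[OF P0'(1,2) P0(2,3)] by blast
  have pe0: "prime_elem P0" using P0'(2) by (intro field_poly_irreducible_imp_prime) simp
  have w1: "carlitz_wieferich_cong (CARD('a) ^ 1) P0" using P0'(3) by simp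
  have h1: "P0 ^ 2 dvd [:0,1:] ^ (CARD('a) ^ 1) - ([:0,1:] + [:of_nat 1 * g0:] + P0 * h0)"
    by (rule D0(5)[rule_format]) simp
  have cond1: "bseq (of_nat 1 * g0) p = alpha + 1 \<and> bseq (of_nat 1 * g0) (p - 1) = alpha"
    using wief[OF D0(1,4) pe0 zero_less_one h1] w1 by blast
  have cond: "bseq g0 p = alpha + 1 \<and> bseq g0 (p - 1) = alpha"
    using cond1 by simp
  obtain b g h where D: "P = [:0,1:] ^ p - [:alpha:] * [:0,1:] - [:b:]" "g \<in> G" "g \<noteq> 0"
     "P dvd [:alpha:] * h - 1"
     "\<forall>r>0. P ^ 2 dvd [:0,1:] ^ (CARD('a) ^ r) - ([:0,1:] + [:of_nat r * g:] + P * h)"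
    using data[of P] HP by blast
  have pe: "prime_elem P" using HP by (intro field_poly_irreducible_imp_prime) simp
  obtain m where m: "m < p" "g0 = of_nat m * g"
    using G_multiples[OF D(2,3)] D0(2) by auto
  have m0: "m > 0" using m D0(3) by (cases m) auto
  have hm: "P ^ 2 dvd [:0,1:] ^ (CARD('a) ^ m) - ([:0,1:] + [:of_nat m * g:] + P * h)"
    by (rule D(5)[rule_format]) (rule m0)
  have "carlitz_wieferich_cong (CARD('a) ^ m) P"
    using wief[OF D(1,4) pe m0 hm] cond unfolding m(2) by blast
  moreover have "m \<in> {1..p-1}" using m m0 by auto
  ultimately show "\<exists>r\<in>{1..p-1}. carlitz_wieferich_cong (CARD('a) ^ r) P" by blast
qed

end
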